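(* Let $(X,\tau)$ be a $\mathbb{B}$-topological space. (i) For every inhabited, saturated and compact $\theta\in\mathbb{B}^X$, the map $\mathrm{sub}_X(\theta,-)\colon\tau\to\mathbb{B}$ is a Scott open $\mathbb{B}$-filter of $\tau$. (ii) For all inhabited, saturated and compact $\theta_1,\theta_2\in\mathbb{B}^X$, $$\mathrm{sub}_X(\theta_2,\theta_1)=\bigwedge_{\lambda\in\tau}\big(\mathrm{sub}_X(\theta_1,\lambda)\to\mathrm{sub}_X(\theta_2,\lambda)\big).$$ (iii) If $(X,\tau)$ is $\mathbb{B}$-sober, then for every Scott open $\mathbb{B}$-filter $F$ of $\tau$ there is a unique inhabited, saturated and compact $\theta\in\mathbb{B}^X$ such that $F(\lambda)=\mathrm{sub}_X(\theta,\lambda)$ for all $\lambda\in\tau$.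
   Context: $\mathbb{B}=\{0,1,tt,ff\}$ is the four-element Boolean algebra with bottom $0$, top $1$, and $tt,ff$ incomparable and complements of each other; $\neg$ is its complement and $a\to b=\neg a\vee b$. For a set $X$, $\mathbb{B}^X$ is the set of maps $X\to\mathbb{B}$ with pointwise order and operations; for $b\in\mathbb{B}$, $b_X$ is the constant map with value $b$; for $x\in X$, $1_x$ is the map sending $x$ to $1$ and all other points to $0$. A $\mathbb{B}$-topology on $X$ is a subset $\tau\subseteq\mathbb{B}^X$ containing all constant maps and closed under arbitrary pointwise joins and finite pointwise meets; its elements are open sets. For $\lambda,\mu\in\mathbb{B}^X$, $\mathrm{sub}_X(\lambda,\mu)=\bigwedge_{x\in X}(\lambda(x)\to\mu(x))$. The specialization $\mathbb{B}$-order is $\Omega(\tau)(x,y)=\bigwedge_{\lambda\in\tau}(\lambda(x)\to\lambda(y))$. $\theta\in\mathbb{B}^X$ is inhabited if $\bigvee_{x\in X}\theta(x)=1$; saturated if $\Omega(\tau)(x,y)\le\theta(x)\to\theta(y)$ for all $x,y\in X$; compact if for every family $\Lambda\subseteq\tau$ directed with respect to the pointwise order, $\mathrm{sub}_X(\theta,\bigvee\Lambda)=\bigvee_{\lambda\in\Lambda}\mathrm{sub}_X(\theta,\lambda)$. A $\mathbb{B}$-filter of $\tau$ is a map $F\colon\tau\to\mathbb{B}$ with $F(b_X)=b$ for all $b\in\mathbb{B}$ and $F(\lambda\wedge\mu)=F(\lambda)\wedge F(\mu)$ for all $\lambda,\mu\in\tau$; it is Scott open if moreover $F(\bigvee\Lambda)=\bigvee_{\lambda\in\Lambda}F(\lambda)$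 for every directed $\Lambda\subseteq\tau$. A $\mathbb{B}$-point of $\tau$ is a frame homomorphism $p\colon\tau\to\mathbb{B}$ (preserving finite meets and arbitrary joins) with $p(b_X)=b$ for all $b\in\mathbb{B}$. $(X,\tau)$ is $\mathbb{B}$-sober if for every $\mathbb{B}$-point $p$ of $\tau$ there is a unique $x\in X$ with $p(\lambda)=\lambda(x)$ for all $\lambda\in\tau$. *)

theory Defs
  imports Main "HOL-Library.Product_Order"
begin

text \<open>The four-element Boolean algebra B = {0,1,tt,ff}, realised as bool x bool with the
product order: 0 = bot = (False,False), 1 = top = (True,True), tt = (True,False),
ff = (False,True); complement is uminus, joins/meets are sup/inf (componentwise).\<close>

type_synonym B = "bool \<times> bool"

definition tt :: B where "tt = (True, False)"
definition ff :: B where "ff = (False, True)"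

definition Bimp :: "B \<Rightarrow> B \<Rightarrow> B" where
  "Bimp a b = sup (- a) b"

text \<open>Maps X -> B are functions on the type 'a (X = UNIV), ordered pointwise.\<close>

definition is_Btop :: "('a \<Rightarrow> B) set \<Rightarrow> bool" where
  "is_Btop \<tau> \<longleftrightarrow>
     (\<forall>b::B. (\<lambda>_. b) \<in> \<tau>) \<and>
     (\<forall>S. S \<subseteq> \<tau> \<longrightarrow> Sup S \<in> \<tau>) \<and>
     (\<forall>l m. l \<in> \<tau> \<longrightarrow> m \<in> \<tau> \<longrightarrow> inf l m \<in> \<tau>)"

definition Bsub :: "('a \<Rightarrow> B) \<Rightarrow> ('a \<Rightarrow> B) \<Rightarrow> B" where
  "Bsub l m = (INF x. Bimp (l x) (m x))"

definition Bspec :: "('a \<Rightarrow> B) set \<Rightarrow> 'a \<Rightarrow> 'a \<Rightarrow> B" where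
  "Bspec \<tau> x y = (INF l\<in>\<tau>. Bimp (l x) (l y))"

definition Binhabited :: "('a \<Rightarrow> B) \<Rightarrow> bool" where
  "Binhabited \<theta> \<longleftrightarrow> (SUP x. \<theta> x) = top"

definition Bsaturated :: "('a \<Rightarrow> B) set \<Rightarrow> ('a \<Rightarrow> B) \<Rightarrow> bool" where
  "Bsaturated \<tau> \<theta> \<longleftrightarrow> (\<forall>x y. Bspec \<tau> x y \<le> Bimp (\<theta> x) (\<theta> y))"

definition directed :: "('a \<Rightarrow> B) set \<Rightarrow> bool" where
  "directed L \<longleftrightarrow> L \<noteq> {} \<and> (\<forall>a\<in>L. \<forall>b\<in>L. \<exists>c\<in>L. a \<le> c \<and> b \<le> c)"

definition Bcompact :: "('a \<Rightarrow> B) set \<Rightarrow> ('a \<Rightarrow> B) \<Rightarrow> bool" where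
  "Bcompact \<tau> \<theta> \<longleftrightarrow>
     (\<forall>L. L \<subseteq> \<tau> \<longrightarrow> directed L \<longrightarrow> Bsub \<theta> (Sup L) = (SUP l\<in>L. Bsub \<theta> l))"

definition Bfilter :: "('a \<Rightarrow> B) set \<Rightarrow> (('a \<Rightarrow> B) \<Rightarrow> B) \<Rightarrow> bool" where
  "Bfilter \<tau> F \<longleftrightarrow>
     (\<forall>b::B. F (\<lambda>_. b) = b) \<and>
     (\<forall>l m. l \<in> \<tau> \<longrightarrow> m \<in> \<tau> \<longrightarrow> F (inf l m) = inf (F l) (F m))"

definition Bscott_open_filter :: "('a \<Rightarrow> B) set \<Rightarrow> (('a \<Rightarrow> B) \<Rightarrow> B) \<Rightarrow> bool" where
  "Bscott_open_filter \<tau> F \<longleftrightarrow>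
     Bfilter \<tau> F \<and>
     (\<forall>L. L \<subseteq> \<tau> \<longrightarrow> directed L \<longrightarrow> F (Sup L) = (SUP l\<in>L. F l))"

definition Bpoint :: "('a \<Rightarrow> B) set \<Rightarrow> (('a \<Rightarrow> B) \<Rightarrow> B) \<Rightarrow> bool" where
  "Bpoint \<tau> p \<longleftrightarrow>
     (\<forall>b::B. p (\<lambda>_. b) = b) \<and>
     (\<forall>l m. l \<in> \<tau> \<longrightarrow> m \<in> \<tau> \<longrightarrow> p (inf l m) = inf (p l) (p m)) \<and>
     (\<forall>S. S \<subseteq> \<tau> \<longrightarrow> p (Sup S) = (SUP l\<in>S. p l))"

definition Bsober :: "('a \<Rightarrow> B) set \<Rightarrow> bool" where
  "Bsober \<tau> \<longleftrightarrow> (\<forall>p. Bpoint \<tau> p \<longrightarrow> (\<exists>!x. \<forall>l\<in>\<tau>. p l = l x))"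

end

theory Submission imports Defs begin
definition atm :: "B \<Rightarrow> bool" where "atm c \<longleftrightarrow> c = tt \<or> c = ff"

lemma tt_le: "tt \<le> x \<longleftrightarrow> fst x" by (cases x) (auto simp: tt_def)
lemma ff_le: "ff \<le> x \<longleftrightarrow> snd x" by (cases x) (auto simp: ff_def)

lemma atm_sup: "atm c \<Longrightarrow> c \<le> sup a b \<longleftrightarrow> c \<le> a \<or> c \<le> b"
  by (auto simp: atm_def tt_le ff_le)
lemma atm_neg: "atm c \<Longrightarrow> c \<le> - a \<longleftrightarrow> \<not> c \<le> a"
  by (cases a) (auto simp: atm_def tt_le ff_le)
lemma atm_Sup: "atm c \<Longrightarrow> c \<le> Sup S \<longleftrightarrow> (\<exists>a\<in>S. c \<le> a)"
  by (force simp: atm_def tt_le ff_le fst_Sup snd_Sup)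
lemma atm_SUP: "atm c \<Longrightarrow> c \<le> (SUP i\<in>I. f i) \<longleftrightarrow> (\<exists>i\<in>I. c \<le> f i)"
  by (simp add: atm_Sup)
lemma atm_compl: "atm c \<Longrightarrow> atm (- c)"
  by (auto simp: atm_def tt_def ff_def)
lemma atm_bot: "atm c \<Longrightarrow> \<not> c \<le> bot"
  by (auto simp: atm_def tt_le ff_le)
lemma atm_top: "atm c \<Longrightarrow> c \<le> top" by simp
lemma B_le: "atm c \<Longrightarrow> (a::B) \<le> b \<longleftrightarrow> (c \<le> a \<longrightarrow> c \<le> b) \<and> (- c \<le> a \<longrightarrow> - c \<le> b)"
  by (cases a; cases b) (auto simp: atm_def tt_def ff_def)
lemma B_eq: "atm c \<Longrightarrow> (a::B) = b \<longleftrightarrow> (c \<le> a \<longleftrightarrow> c \<le> b) \<and> (- c \<le> a \<longleftrightarrow> - c \<le> b)"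
  by (cases a; cases b) (auto simp: atm_def tt_def ff_def)
lemma atm_inf: "atm c \<Longrightarrow> inf a c = (if c \<le> a then c else bot)"
  by (cases a) (auto simp: atm_def tt_def ff_def Pair_bot_bot[symmetric])
lemma atm_tt: "atm tt" and atm_ff: "atm ff" by (auto simp: atm_def)
lemma atm_Bimp: "atm c \<Longrightarrow> c \<le> Bimp a b \<longleftrightarrow> (c \<le> a \<longrightarrow> c \<le> b)"
  by (auto simp: Bimp_def atm_sup atm_neg)
lemma atm_Bsub: "atm c \<Longrightarrow> c \<le> Bsub l m \<longleftrightarrow> (\<forall>x. c \<le> l x \<longrightarrow> c \<le> m x)"
  by (simp add: Bsub_def le_INF_iff atm_Bimp)
lemma atm_Bspec: "atm c \<Longrightarrow> c \<le> Bspec T x y \<longleftrightarrow> (\<forall>l\<in>T. c \<le> l x \<longrightarrow> c \<le> l y)"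
  by (simp add: Bspec_def le_INF_iff atm_Bimp)
lemma B_eq_all: "(a::B) = b \<longleftrightarrow> (\<forall>c. atm c \<longrightarrow> (c \<le> a \<longleftrightarrow> c \<le> b))"
proof
  assume "\<forall>c. atm c \<longrightarrow> (c \<le> a \<longleftrightarrow> c \<le> b)"
  then show "a = b" using B_eq[OF atm_tt, of a b] atm_compl[OF atm_tt] atm_tt by blast
qed simp
lemma Btop_const: "is_Btop T \<Longrightarrow> (\<lambda>_. b) \<in> T" unfolding is_Btop_def by blast
lemma Btop_Sup: "is_Btop T \<Longrightarrow> S \<subseteq> T \<Longrightarrow> Sup S \<in> T" by (simp add: is_Btop_def)
lemma Btop_inf: "is_Btop T \<Longrightarrow> l \<in> T \<Longrightarrow> m \<in> T \<Longrightarrow> inf l m \<in> T" by (simp add: is_Btop_def)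
lemma Btop_sup: "is_Btop T \<Longrightarrow> l \<in> T \<Longrightarrow> m \<in> T \<Longrightarrow> sup l m \<in> T"
  using Btop_Sup[of T "{l,m}"] by simp

lemma inhab_atm: "Binhabited \<theta> \<Longrightarrow> atm c \<Longrightarrow> \<exists>x. c \<le> \<theta> x"
  unfolding Binhabited_def using atm_SUP[of c "\<lambda>x. \<theta> x" UNIV] by simp

lemma part1:
  assumes "Binhabited \<theta>" "Bcompact T \<theta>"
  shows "Bscott_open_filter T (Bsub \<theta>)"
proof -
  have "Bsub \<theta> (\<lambda>_. b) = b" for b
    unfolding B_eq_all using inhab_atm[OF assms(1)] by (auto simp: atm_Bsub)
  moreover have "Bsub \<theta> (inf l m) = inf (Bsub \<theta> l) (Bsub \<theta> m)" for l m
    unfolding B_eq_all by (auto simp: atm_Bsub)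
  ultimately show ?thesis using assms(2)
    by (simp add: Bscott_open_filter_def Bfilter_def Bcompact_def)
qed

lemma part2:
  assumes top: "is_Btop T" and sat: "Bsaturated T \<theta>1"
  shows "Bsub \<theta>2 \<theta>1 = (INF l\<in>T. Bimp (Bsub \<theta>1 l) (Bsub \<theta>2 l))"
  unfolding B_eq_all
proof (intro allI impI)
  fix c assume c: "atm c"
  have "(\<forall>x. c \<le> \<theta>2 x \<longrightarrow> c \<le> \<theta>1 x) \<longleftrightarrow>
        (\<forall>l\<in>T. (\<forall>x. c \<le> \<theta>1 x \<longrightarrow> c \<le> l x) \<longrightarrow> (\<forall>x. c \<le> \<theta>2 x \<longrightarrow> c \<le> l x))"
  proof
    assume R: "\<forall>l\<in>T. (\<forall>x. c \<le> \<theta>1 x \<longrightarrow> c \<le> l x) \<longrightarrow> (\<forall>x. c \<le> \<theta>2 x \<longrightarrow> c \<le> l x)"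
    show "\<forall>x. c \<le> \<theta>2 x \<longrightarrow> c \<le> \<theta>1 x"
    proof (intro allI impI, rule ccontr)
      fix x assume x2: "c \<le> \<theta>2 x" and x1: "\<not> c \<le> \<theta>1 x"
      have "\<exists>l. c \<le> \<theta>1 y \<longrightarrow> l \<in> T \<and> c \<le> l y \<and> \<not> c \<le> l x" for y
      proof (cases "c \<le> \<theta>1 y")
        case True
        have "\<not> c \<le> Bspec T y x"
        proof
          assume "c \<le> Bspec T y x"
          also have "\<dots> \<le> Bimp (\<theta>1 y) (\<theta>1 x)" using sat by (simp add: Bsaturated_def)
          finally show False using True x1 c by (simp add: atm_Bimp)
        qed
        then show ?thesis using c by (auto simp: atm_Bspec)
      qed simp
      then obtain g where g: "\<And>y. c \<le> \<theta>1 y \<Longrightarrow> g y \<in> T \<and> c \<le> g y y \<and> \<not> c \<le> g y x"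
        by metis
      define L where "L = Sup (g ` {y. c \<le> \<theta>1 y})"
      have LT: "L \<in> T" unfolding L_def using g by (intro Btop_Sup[OF top]) auto
      have Lz: "c \<le> L z \<longleftrightarrow> (\<exists>y. c \<le> \<theta>1 y \<and> c \<le> g y z)" for z
        unfolding L_def Sup_apply image_image atm_SUP[OF c] by simp
      have "\<forall>y. c \<le> \<theta>1 y \<longrightarrow> c \<le> L y" using Lz g by blast
      then have "c \<le> L x" using R LT x2 by blast
      then show False using Lz g by blast
    qed
  qed blast
  then show "(c \<le> Bsub \<theta>2 \<theta>1) = (c \<le> (INF l\<in>T. Bimp (Bsub \<theta>1 l) (Bsub \<theta>2 l)))"
    using c by (simp add: le_INF_iff atm_Bimp atm_Bsub)
qed
lemma F_const: "Bfilter T F \<Longrightarrow> F (\<lambda>_. b) = b" unfolding Bfilter_def by blast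
lemma F_inf: "Bfilter T F \<Longrightarrow> l \<in> T \<Longrightarrow> m \<in> T \<Longrightarrow> F (inf l m) = inf (F l) (F m)"
  by (simp add: Bfilter_def)
lemma F_mono: "Bfilter T F \<Longrightarrow> l \<in> T \<Longrightarrow> m \<in> T \<Longrightarrow> l \<le> m \<Longrightarrow> F l \<le> F m"
  using F_inf[of T F l m] by (metis inf.absorb1 inf.cobounded2)
lemma F_atm: "is_Btop T \<Longrightarrow> Bfilter T F \<Longrightarrow> l \<in> T \<Longrightarrow> atm c \<Longrightarrow>
   c \<le> F (inf l (\<lambda>_. c)) \<longleftrightarrow> c \<le> F l"
  using F_inf[of T F l "\<lambda>_. c"] F_const[of T F c] Btop_const[of T c] by simp

lemma atm_nle_compl: "atm c \<Longrightarrow> \<not> - c \<le> c"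
  using atm_neg[OF atm_compl, of c "-c"] by simp
lemma atm_nle_compl2: "atm c \<Longrightarrow> \<not> c \<le> - c"
  using atm_neg[of c c] by simp
lemma key:
  assumes top: "is_Btop T" and sob: "Bsober T" and so: "Bscott_open_filter T F"
    and c: "atm c" and lT: "l \<in> T" and nl: "\<not> c \<le> F l"
    and H: "\<forall>x. (\<forall>m\<in>T. c \<le> F m \<longrightarrow> c \<le> m x) \<longrightarrow> c \<le> l x"
  shows False
proof -
  have fil: "Bfilter T F" using so by (simp add: Bscott_open_filter_def)
  have scott: "\<And>L. L \<subseteq> T \<Longrightarrow> directed L \<Longrightarrow> F (Sup L) = (SUP l\<in>L. F l)"
    using so by (simp add: Bscott_open_filter_def)
  define S where "S = {m\<in>T. l \<le> m \<and> \<not> c \<le> F m}"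
  have "\<exists>P\<in>S. \<forall>a\<in>S. P \<le> a \<longrightarrow> a = P"
  proof (rule predicate_Zorn)
    show "partial_order_on S (relation_of (\<le>) S)"
      by (rule partial_order_on_relation_ofI) auto
  next
    fix C assume C: "C \<in> Chains (relation_of (\<le>) S)"
    then have CS: "C \<subseteq> S" and Ctot: "\<And>a b. a \<in> C \<Longrightarrow> b \<in> C \<Longrightarrow> a \<le> b \<or> b \<le> a"
      unfolding Chains_def relation_of_def by auto
    show "\<exists>u\<in>S. \<forall>a\<in>C. a \<le> u"
    proof (cases "C = {}")
      case True
      then show ?thesis using lT nl by (auto simp: S_def)
    next
      case False
      have CT: "C \<subseteq> T" using CS by (auto simp: S_def)
      have dir: "directed C" unfolding directed_def using False Ctot by blast
      have "Sup C \<in> T" using Btop_Sup[OF top CT] .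
      moreover obtain a where "a \<in> C" using False by blast
      then have "l \<le> Sup C" using CS by (auto simp: S_def intro: order_trans Sup_upper)
      moreover have "\<not> c \<le> F (Sup C)"
        using scott[OF CT dir] CS by (auto simp: atm_SUP[OF c] S_def)
      ultimately show ?thesis by (auto simp: S_def intro: Sup_upper)
    qed
  qed
  then obtain P where PS: "P \<in> S" and Pmax: "\<And>a. a \<in> S \<Longrightarrow> P \<le> a \<Longrightarrow> a = P" by blast
  have PT: "P \<in> T" and lP: "l \<le> P" and nP: "\<not> c \<le> F P" using PS by (auto simp: S_def)
  define x0 :: 'a where "x0 = undefined"
  define p where "p = (\<lambda>V. sup (inf c (SUP x. inf (V x) (- P x))) (inf (-c) (V x0)))"
  have pc: "c \<le> p V \<longleftrightarrow> (\<exists>x. c \<le> V x \<and> \<not> c \<le> P x)" for V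
    unfolding p_def using c atm_nle_compl2[OF c]
    by (simp add: atm_sup atm_SUP atm_neg)
  have pd: "- c \<le> p V \<longleftrightarrow> - c \<le> V x0" for V
    unfolding p_def using atm_compl[OF c] atm_nle_compl[OF c]
    by (simp add: atm_sup)
  have peq: "p V = b \<longleftrightarrow> ((\<exists>x. c \<le> V x \<and> \<not> c \<le> P x) \<longleftrightarrow> c \<le> b) \<and> (- c \<le> V x0 \<longleftrightarrow> - c \<le> b)"
    for V b using B_eq[OF c, of "p V" b] pc pd by simp
  have ex_out: "\<exists>x. \<not> c \<le> P x"
  proof (rule ccontr)
    assume "\<not> ?thesis"
    then have "(\<lambda>_. c) \<le> P" by (simp add: le_fun_def)
    then have "F (\<lambda>_. c) \<le> F P" using F_mono[OF fil Btop_const[OF top] PT] by blast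
    then show False using nP F_const[OF fil] by simp
  qed
  have prime: "\<exists>x. c \<le> V x \<and> c \<le> W x \<and> \<not> c \<le> P x"
    if VT: "V \<in> T" and WT: "W \<in> T" and x1: "c \<le> V x1" "\<not> c \<le> P x1"
      and x2: "c \<le> W x2" "\<not> c \<le> P x2" for V W x1 x2
  proof (rule ccontr)
    assume "\<not> ?thesis"
    then have VW: "\<And>x. c \<le> V x \<Longrightarrow> c \<le> W x \<Longrightarrow> c \<le> P x" by blast
    have up: "c \<le> F (sup P (inf U (\<lambda>_. c)))"
      if UT: "U \<in> T" and y: "c \<le> U y" "\<not> c \<le> P y" for U y
    proof (rule ccontr)
      assume nc: "\<not> ?thesis"
      let ?P1 = "sup P (inf U (\<lambda>_. c))"
      have P1T: "?P1 \<in> T" by (intro Btop_sup[OF top] Btop_inf[OF top] PT UT Btop_const[OF top])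
      have "?P1 \<in> S" using P1T nc lP by (auto simp: S_def intro: order_trans)
      then have "?P1 = P" using Pmax by simp
      moreover have "c \<le> ?P1 y" using y by (simp add: le_supI2)
      ultimately show False using y by simp
    qed
    have u1: "c \<le> F (sup P (inf V (\<lambda>_. c)))" using up[OF VT x1] .
    have u2: "c \<le> F (sup P (inf W (\<lambda>_. c)))" using up[OF WT x2] .
    have T1: "sup P (inf V (\<lambda>_. c)) \<in> T"
      by (intro Btop_sup[OF top] Btop_inf[OF top] PT VT Btop_const[OF top])
    have T2: "sup P (inf W (\<lambda>_. c)) \<in> T"
      by (intro Btop_sup[OF top] Btop_inf[OF top] PT WT Btop_const[OF top])
    have eq: "inf (sup P (inf V (\<lambda>_. c))) (sup P (inf W (\<lambda>_. c))) = P"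
    proof (rule antisym)
      show "inf (sup P (inf V (\<lambda>_. c))) (sup P (inf W (\<lambda>_. c))) \<le> P"
        unfolding le_fun_def
      proof
        fix x
        show "inf (sup P (inf V (\<lambda>_. c))) (sup P (inf W (\<lambda>_. c))) x \<le> P x"
          apply (simp only: inf_apply sup_apply)
          apply (subst B_le[OF c])
          using VW[of x] atm_nle_compl[OF c] atm_compl[OF c] c
          by (auto simp add: atm_sup)
      qed
    qed simp
    have "c \<le> F P"
      using u1 u2 F_inf[OF fil T1 T2] eq by simp
    then show False using nP by simp
  qed
  have "Bpoint T p"
    unfolding Bpoint_def
  proof (intro conjI allI impI)
    fix b :: B show "p (\<lambda>_. b) = b" using peq ex_out by auto
  next
    fix V W assume "V \<in> T" "W \<in> T"
    then show "p (inf V W) = inf (p V) (p W)"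
      using prime[of V W] by (auto simp: peq pc pd)
  next
    fix Q assume "Q \<subseteq> T"
    show "p (Sup Q) = (SUP l\<in>Q. p l)"
      unfolding peq using pc pd c atm_compl[OF c]
      by (auto simp: Sup_apply atm_SUP)
  qed
  then obtain z where z: "\<And>V. V \<in> T \<Longrightarrow> p V = V z"
    using sob unfolding Bsober_def by blast
  have nPz: "\<not> c \<le> P z" using z[OF PT] pc[of P] by auto
  have "c \<le> m z" if mT: "m \<in> T" and cm: "c \<le> F m" for m
  proof (rule ccontr)
    assume "\<not> c \<le> m z"
    then have "\<forall>x. c \<le> m x \<longrightarrow> c \<le> P x" using z[OF mT] pc[of m] by auto
    then have "inf m (\<lambda>_. c) \<le> P"
      unfolding le_fun_def using atm_inf[OF c] atm_bot[OF c] by (auto simp: atm_inf[OF c])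
    then have "F (inf m (\<lambda>_. c)) \<le> F P"
      using F_mono[OF fil Btop_inf[OF top mT Btop_const[OF top]] PT] by blast
    moreover have "c \<le> F (inf m (\<lambda>_. c))" using F_atm[OF top fil mT c] cm by simp
    ultimately show False using nP by (meson order_trans)
  qed
  then have "c \<le> l z" using H by blast
  then have "c \<le> P z" using lP by (auto simp: le_fun_def intro: order_trans)
  then show False using nPz by simp
qed
lemma B_le_all: "(a::B) \<le> b \<longleftrightarrow> (\<forall>c. atm c \<longrightarrow> c \<le> a \<longrightarrow> c \<le> b)"
proof
  assume "\<forall>c. atm c \<longrightarrow> c \<le> a \<longrightarrow> c \<le> b"
  then have 1: "tt \<le> a \<longrightarrow> tt \<le> b" and 2: "- tt \<le> a \<longrightarrow> - tt \<le> b"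
    using atm_compl[OF atm_tt] atm_tt by blast+
  show "a \<le> b" by (subst B_le[OF atm_tt]) (intro conjI 1 2)
next
  assume "a \<le> b" then show "\<forall>c. atm c \<longrightarrow> c \<le> a \<longrightarrow> c \<le> b" by (blast intro: order_trans)
qed

lemma B_leI: "(\<And>c. atm c \<Longrightarrow> c \<le> a \<Longrightarrow> c \<le> b) \<Longrightarrow> (a::B) \<le> b"
  by (rule B_le_all[THEN iffD2]) blast

lemma Bsub_top_le:
  fixes a b :: "'x \<Rightarrow> B"
  assumes h: "Bsub a b = top" shows "a \<le> b"
proof -
  have H: "\<forall>c. atm c \<longrightarrow> (\<forall>x. c \<le> a x \<longrightarrow> c \<le> b x)"
  proof (rule allI, rule impI)
    fix c assume c: "atm c"
    have "c \<le> Bsub a b" using h by simp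
    then show "\<forall>x. c \<le> a x \<longrightarrow> c \<le> b x" by (simp only: atm_Bsub[OF c])
  qed
  show "a \<le> b"
  proof (rule le_funI, rule B_leI)
    fix x c assume "atm c" "c \<le> a x" then show "c \<le> b x" using H by blast
  qed
qed

lemma part3_ex:
  assumes top: "is_Btop T" and sob: "Bsober T" and so: "Bscott_open_filter T F"
  shows "\<exists>\<theta>. Binhabited \<theta> \<and> Bsaturated T \<theta> \<and> Bcompact T \<theta> \<and> (\<forall>l\<in>T. F l = Bsub \<theta> l)"
proof -
  have fil: "Bfilter T F" using so by (simp add: Bscott_open_filter_def)
  define \<theta> where "\<theta> = (\<lambda>x. INF m\<in>T. Bimp (F m) (m x))"
  have thc: "atm c \<Longrightarrow> c \<le> \<theta> x \<longleftrightarrow> (\<forall>m\<in>T. c \<le> F m \<longrightarrow> c \<le> m x)" for c x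
    unfolding \<theta>_def by (simp add: le_INF_iff atm_Bimp)
  have eqF: "F l = Bsub \<theta> l" if lT: "l \<in> T" for l
    unfolding B_eq_all
  proof (intro allI impI)
    fix c assume c: "atm c"
    show "c \<le> F l \<longleftrightarrow> c \<le> Bsub \<theta> l"
      unfolding atm_Bsub[OF c]
    proof
      assume cF: "c \<le> F l"
      show "\<forall>x. c \<le> \<theta> x \<longrightarrow> c \<le> l x"
      proof (intro allI impI)
        fix x assume "c \<le> \<theta> x"
        then have "\<forall>m\<in>T. c \<le> F m \<longrightarrow> c \<le> m x" using thc[OF c] by blast
        then show "c \<le> l x" using lT cF by blast
      qed
    next
      assume H: "\<forall>x. c \<le> \<theta> x \<longrightarrow> c \<le> l x"
      show "c \<le> F l"
      proof (rule ccontr)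
        assume "\<not> c \<le> F l"
        note k = key[OF top sob so c lT this]
        have "\<forall>x. (\<forall>m\<in>T. c \<le> F m \<longrightarrow> c \<le> m x) \<longrightarrow> c \<le> l x"
          using H by (simp add: thc[OF c])
        then show False by (rule k)
      qed
    qed
  qed
  have inh: "Binhabited \<theta>"
    unfolding Binhabited_def B_eq_all
  proof (intro allI impI)
    fix c assume c: "atm c"
    have "\<exists>x. c \<le> \<theta> x"
    proof (rule ccontr)
      assume "\<not> ?thesis"
      then have "c \<le> Bsub \<theta> (\<lambda>_. bot)" using c by (simp add: atm_Bsub)
      also have "\<dots> = F (\<lambda>_. bot)" using eqF[OF Btop_const[OF top]] by simp
      also have "\<dots> = bot" using F_const[OF fil] .
      finally show False using atm_bot[OF c] by simp
    qed
    then show "c \<le> (SUP x. \<theta> x) \<longleftrightarrow> c \<le> top" using atm_SUP[OF c, of \<theta> UNIV] by simp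
  qed
  have sat: "Bsaturated T \<theta>"
    unfolding Bsaturated_def
  proof (intro allI)
    fix x y
    show "Bspec T x y \<le> Bimp (\<theta> x) (\<theta> y)"
    proof (rule B_leI)
      fix c assume c: "atm c" and h: "c \<le> Bspec T x y"
      show "c \<le> Bimp (\<theta> x) (\<theta> y)"
        using h unfolding atm_Bspec[OF c] atm_Bimp[OF c] thc[OF c] by blast
    qed
  qed
  have comp: "Bcompact T \<theta>"
    unfolding Bcompact_def
  proof (intro allI impI)
    fix L assume LT: "L \<subseteq> T" and dir: "directed L"
    have "Bsub \<theta> (Sup L) = F (Sup L)" using eqF[OF Btop_Sup[OF top LT]] by simp
    also have "\<dots> = (SUP l\<in>L. F l)" using so LT dir by (simp add: Bscott_open_filter_def)
    also have "\<dots> = (SUP l\<in>L. Bsub \<theta> l)" using eqF LT by (intro SUP_cong) auto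
    finally show "Bsub \<theta> (Sup L) = (SUP l\<in>L. Bsub \<theta> l)" .
  qed
  show ?thesis using inh sat comp eqF by blast
qed

lemma part3_uniq:
  assumes top: "is_Btop T"
    and a: "Bsaturated T \<theta> \<and> (\<forall>l\<in>T. F l = Bsub \<theta> l)"
    and b: "Bsaturated T \<theta>' \<and> (\<forall>l\<in>T. F l = Bsub \<theta>' l)"
  shows "\<theta> \<le> \<theta>'"
proof -
  have "Bsub \<theta> \<theta>' = (INF l\<in>T. Bimp (Bsub \<theta>' l) (Bsub \<theta> l))"
    using b by (intro part2[OF top]) simp
  also have "\<dots> = (INF l\<in>T. Bimp (F l) (F l))" using a b by (intro INF_cong) auto
  also have "\<dots> = top" by (simp add: Bimp_def)
  finally show ?thesis by (rule Bsub_top_le)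
qed

theorem mainTheorem1:
  fixes \<tau> :: "('a \<Rightarrow> B) set"
  assumes top: "is_Btop \<tau>"
  shows "(\<forall>\<theta>. Binhabited \<theta> \<and> Bsaturated \<tau> \<theta> \<and> Bcompact \<tau> \<theta> \<longrightarrow>
            Bscott_open_filter \<tau> (Bsub \<theta>))
       \<and> (\<forall>\<theta>1 \<theta>2.
            Binhabited \<theta>1 \<and> Bsaturated \<tau> \<theta>1 \<and> Bcompact \<tau> \<theta>1 \<and>
            Binhabited \<theta>2 \<and> Bsaturated \<tau> \<theta>2 \<and> Bcompact \<tau> \<theta>2 \<longrightarrow>
            Bsub \<theta>2 \<theta>1 = (INF l\<in>\<tau>. Bimp (Bsub \<theta>1 l) (Bsub \<theta>2 l)))
       \<and> (Bsober \<tau> \<longrightarrow>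
           (\<forall>F. Bscott_open_filter \<tau> F \<longrightarrow>
              (\<exists>!\<theta>. Binhabited \<theta> \<and> Bsaturated \<tau> \<theta> \<and> Bcompact \<tau> \<theta> \<and>
                     (\<forall>l\<in>\<tau>. F l = Bsub \<theta> l))))"
proof (intro conjI allI impI)
  fix \<theta> assume "Binhabited \<theta> \<and> Bsaturated \<tau> \<theta> \<and> Bcompact \<tau> \<theta>"
  then show "Bscott_open_filter \<tau> (Bsub \<theta>)" by (intro part1) simp_all
next
  fix \<theta>1 \<theta>2 :: "'a \<Rightarrow> B"
  assume "Binhabited \<theta>1 \<and> Bsaturated \<tau> \<theta>1 \<and> Bcompact \<tau> \<theta>1 \<and>
            Binhabited \<theta>2 \<and> Bsaturated \<tau> \<theta>2 \<and> Bcompact \<tau> \<theta>2"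
  then show "Bsub \<theta>2 \<theta>1 = (INF l\<in>\<tau>. Bimp (Bsub \<theta>1 l) (Bsub \<theta>2 l))"
    by (intro part2[OF top]) simp
next
  fix F assume sob: "Bsober \<tau>" and so: "Bscott_open_filter \<tau> F"
  show "\<exists>!\<theta>. Binhabited \<theta> \<and> Bsaturated \<tau> \<theta> \<and> Bcompact \<tau> \<theta> \<and> (\<forall>l\<in>\<tau>. F l = Bsub \<theta> l)"
  proof (rule ex_ex1I)
    show "\<exists>\<theta>. Binhabited \<theta> \<and> Bsaturated \<tau> \<theta> \<and> Bcompact \<tau> \<theta> \<and> (\<forall>l\<in>\<tau>. F l = Bsub \<theta> l)"
      using part3_ex[OF top sob so] .
  next
    fix \<theta> \<theta>' assume A: "Binhabited \<theta> \<and> Bsaturated \<tau> \<theta> \<and> Bcompact \<tau> \<theta> \<and> (\<forall>l\<in>\<tau>. F l = Bsub \<theta> l)"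
      and B: "Binhabited \<theta>' \<and> Bsaturated \<tau> \<theta>' \<and> Bcompact \<tau> \<theta>' \<and> (\<forall>l\<in>\<tau>. F l = Bsub \<theta>' l)"
    have "\<theta> \<le> \<theta>'" using A B by (intro part3_uniq[OF top, of \<theta> F \<theta>']) simp_all
    moreover have "\<theta>' \<le> \<theta>" using A B by (intro part3_uniq[OF top, of \<theta>' F \<theta>]) simp_all
    ultimately show "\<theta> = \<theta>'" by (rule antisym)
  qed
qed
end
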